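(* In the unweighted setting (all offline weights equal to $1$), any algorithm for two-stage bipartite matching with advice that is $R$-robust is at most $C$-consistent, where $R+C\le \tfrac32$. In other words, no algorithm is simultaneously $R$-robust and $C$-consistent with $R+C>\tfrac32$.
   Context: Setting (two-stage bipartite matching with advice). A bipartite graph $G=(D,S,E)$ has offline vertices $S$ with weights $w_j$ (here all $w_j=1$) and online vertices $D=D_1\sqcup D_2$ arriving in two stages; $E_k$ is the set of edges between $D_k$ and $S$. An algorithm sees $(D_1,S,E_1)$ and the advice (a matching $A\subseteq E_1$), irrevocably chooses a (possibly random, or fractional) matching in $E_1$, then sees $E_2$ and chooses a matching in $E_2$ on the remaining capacity; its value is the (expected) total weight of matched offline vertices. $\mathsf{OPT}(G)$ is the maximum weight of a matching in $G$; $\mathsf{ADVICE}(G,A)=\sum_{j\in S_1}w_j+\max\{\sum_{j\text{ covered by }M}w_j: M\subseteq E_2\text{ a matching covering no vertex of } S_1\}$, where $S_1$ is the set of offline vertices covered by $A$. An algorithm is $R$-robust if its value is $\ge R\cdot\mathsf{OPT}(G)$ for all $G,A$, and $C$-consistent if its value is $\ge C\cdot\mathsf{ADVICE}(G,A)$ for all $G,A$. *)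

theory Defs
  imports Main "HOL.Real"
begin

(* Vertices (online and offline) are natural numbers; an edge (d, s) joins
   online vertex d to offline vertex s.  All offline weights are 1. *)

type_synonym edges = "(nat \<times> nat) set"
type_synonym frac = "nat \<times> nat \<Rightarrow> real"

definition on_load :: "edges \<Rightarrow> frac \<Rightarrow> nat \<Rightarrow> real" where
  "on_load E x i = (\<Sum>e\<in>{e\<in>E. fst e = i}. x e)"

definition off_load :: "edges \<Rightarrow> frac \<Rightarrow> nat \<Rightarrow> real" where
  "off_load E x j = (\<Sum>e\<in>{e\<in>E. snd e = j}. x e)"

definition frac_matching :: "edges \<Rightarrow> (nat \<Rightarrow> real) \<Rightarrow> frac \<Rightarrow> bool" where
  "frac_matching E cap x \<longleftrightarrow>
     (\<forall>e. 0 \<le> x e) \<and> (\<forall>e. e \<notin> E \<longrightarrow> x e = 0) \<and>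
     (\<forall>i. on_load E x i \<le> 1) \<and> (\<forall>j. off_load E x j \<le> cap j)"

definition matching :: "edges \<Rightarrow> bool" where
  "matching M \<longleftrightarrow>
     (\<forall>e\<in>M. \<forall>e'\<in>M. fst e = fst e' \<longrightarrow> e = e') \<and>
     (\<forall>e\<in>M. \<forall>e'\<in>M. snd e = snd e' \<longrightarrow> e = e')"

definition two_stage_instance ::
  "nat set \<Rightarrow> nat set \<Rightarrow> nat set \<Rightarrow> edges \<Rightarrow> edges \<Rightarrow> bool" where
  "two_stage_instance D1 D2 S E1 E2 \<longleftrightarrow>
     finite D1 \<and> finite D2 \<and> finite S \<and> D1 \<inter> D2 = {} \<and>
     E1 \<subseteq> D1 \<times> S \<and> E2 \<subseteq> D2 \<times> S"

(* OPT(G): maximum size (= weight, unit weights) of a matching in E1 \<union> E2 *)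
definition OPT :: "edges \<Rightarrow> edges \<Rightarrow> nat" where
  "OPT E1 E2 = Max (card ` {M. M \<subseteq> E1 \<union> E2 \<and> matching M})"

(* ADVICE(G,A) with S1 = offline vertices covered by A *)
definition ADVICE :: "edges \<Rightarrow> edges \<Rightarrow> edges \<Rightarrow> nat" where
  "ADVICE E1 E2 A = card (snd ` A) +
     Max (card ` {M. M \<subseteq> E2 \<and> matching M \<and> snd ` M \<inter> snd ` A = {}})"

(* An algorithm: stage 1 sees (D1, S, E1, A); stage 2 additionally sees (D2, E2).
   Randomised algorithms are represented by their fractional (expected) matchings. *)
type_synonym stage1 = "nat set \<Rightarrow> nat set \<Rightarrow> edges \<Rightarrow> edges \<Rightarrow> frac"
type_synonym stage2 = "nat set \<Rightarrow> nat set \<Rightarrow> edges \<Rightarrow> edges \<Rightarrow> nat set \<Rightarrow> edges \<Rightarrow> frac"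

definition valid_advice :: "edges \<Rightarrow> edges \<Rightarrow> bool" where
  "valid_advice E1 A \<longleftrightarrow> A \<subseteq> E1 \<and> matching A"

definition valid_alg :: "stage1 \<Rightarrow> stage2 \<Rightarrow> bool" where
  "valid_alg alg1 alg2 \<longleftrightarrow>
     (\<forall>D1 D2 S E1 E2 A. two_stage_instance D1 D2 S E1 E2 \<and> valid_advice E1 A \<longrightarrow>
        (let x1 = alg1 D1 S E1 A; x2 = alg2 D1 S E1 A D2 E2 in
          frac_matching E1 (\<lambda>_. 1) x1 \<and>
          frac_matching E2 (\<lambda>j. 1 - off_load E1 x1 j) x2))"

definition alg_value :: "stage1 \<Rightarrow> stage2 \<Rightarrow> nat set \<Rightarrow> nat set \<Rightarrow> nat set
    \<Rightarrow> edges \<Rightarrow> edges \<Rightarrow> edges \<Rightarrow> real" where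
  "alg_value alg1 alg2 D1 D2 S E1 E2 A =
     (let x1 = alg1 D1 S E1 A; x2 = alg2 D1 S E1 A D2 E2 in
       (\<Sum>j\<in>S. off_load E1 x1 j + off_load E2 x2 j))"

definition robust :: "stage1 \<Rightarrow> stage2 \<Rightarrow> real \<Rightarrow> bool" where
  "robust alg1 alg2 R \<longleftrightarrow>
     (\<forall>D1 D2 S E1 E2 A. two_stage_instance D1 D2 S E1 E2 \<and> valid_advice E1 A \<longrightarrow>
        alg_value alg1 alg2 D1 D2 S E1 E2 A \<ge> R * real (OPT E1 E2))"

definition consistent :: "stage1 \<Rightarrow> stage2 \<Rightarrow> real \<Rightarrow> bool" where
  "consistent alg1 alg2 C \<longleftrightarrow>
     (\<forall>D1 D2 S E1 E2 A. two_stage_instance D1 D2 S E1 E2 \<and> valid_advice E1 A \<longrightarrow>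
        alg_value alg1 alg2 D1 D2 S E1 E2 A \<ge> C * real (ADVICE E1 E2 A))"

end

theory Submission
  imports Defs
begin

lemma card_match_le:
  assumes "matching M" "snd ` M \<subseteq> T" "finite T"
  shows "card M \<le> card T"
proof -
  have "inj_on snd M" using assms(1) unfolding matching_def inj_on_def by blast
  hence "card M = card (snd ` M)" by (simp add: card_image)
  also have "\<dots> \<le> card T" using assms by (simp add: card_mono)
  finally show ?thesis .
qed

lemma max_eq:
  assumes "finite X" "k \<in> X" "\<forall>y\<in>X. y \<le> (k::nat)"
  shows "Max X = k"
  using assms by (meson Max_eqI)

theorem mainTheorem6:
  fixes alg1 :: stage1 and alg2 :: stage2 and R C :: real
  assumes "valid_alg alg1 alg2"
    and "robust alg1 alg2 R"
    and "consistent alg1 alg2 C"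
  shows "R + C \<le> 3 / 2"
proof -
  define E1 :: edges where "E1 = {(0,0),(0,1)}"
  define A :: edges where "A = {(0,0)}"
  define EC :: edges where "EC = {(1,1)}"
  define ER :: edges where "ER = {(1,0)}"
  define S :: "nat set" where "S = {0,1}"
  have instC: "two_stage_instance {0} {1} S E1 EC \<and> valid_advice E1 A"
    unfolding two_stage_instance_def valid_advice_def matching_def E1_def EC_def A_def S_def by auto
  have instR: "two_stage_instance {0} {1} S E1 ER \<and> valid_advice E1 A"
    unfolding two_stage_instance_def valid_advice_def matching_def E1_def ER_def A_def S_def by auto
  define x1 where "x1 = alg1 {0} S E1 A"
  define xc where "xc = alg2 {0} S E1 A {1} EC"
  define xr where "xr = alg2 {0} S E1 A {1} ER"
  have fC: "frac_matching E1 (\<lambda>_. 1) x1" "frac_matching EC (\<lambda>j. 1 - off_load E1 x1 j) xc"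
    using assms(1) instC unfolding valid_alg_def x1_def xc_def Let_def by blast+
  have fR: "frac_matching ER (\<lambda>j. 1 - off_load E1 x1 j) xr"
    using assms(1) instR unfolding valid_alg_def x1_def xr_def Let_def by blast
  have s1: "{e\<in>E1. fst e = 0} = {(0,0),(0,1)}" unfolding E1_def by auto
  have s2: "{e\<in>E1. snd e = 0} = {(0,0)}" unfolding E1_def by auto
  have s3: "{e\<in>E1. snd e = 1} = {(0,1)}" unfolding E1_def by auto
  have s4: "{e\<in>EC. snd e = 0} = {}" unfolding EC_def by auto
  have s5: "{e\<in>EC. snd e = 1} = {(1,1)}" unfolding EC_def by auto
  have s6: "{e\<in>ER. snd e = 0} = {(1,0)}" unfolding ER_def by auto
  have s7: "{e\<in>ER. snd e = 1} = {}" unfolding ER_def by auto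
  have ab: "x1 (0,0) + x1 (0,1) \<le> 1"
  proof -
    have "on_load E1 x1 0 \<le> 1" using fC(1) unfolding frac_matching_def by blast
    thus ?thesis unfolding on_load_def s1 by simp
  qed
  have c2: "xc (1,1) \<le> 1 - x1 (0,1)"
  proof -
    have "off_load EC xc 1 \<le> 1 - off_load E1 x1 1" using fC(2) unfolding frac_matching_def by blast
    thus ?thesis unfolding off_load_def s3 s5 by simp
  qed
  have r2: "xr (1,0) \<le> 1 - x1 (0,0)"
  proof -
    have "off_load ER xr 0 \<le> 1 - off_load E1 x1 0" using fR unfolding frac_matching_def by blast
    thus ?thesis unfolding off_load_def s2 s6 by simp
  qed
  have vC: "alg_value alg1 alg2 {0} {1} S E1 EC A = x1 (0,0) + x1 (0,1) + xc (1,1)"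
    unfolding alg_value_def Let_def x1_def[symmetric] xc_def[symmetric]
    unfolding S_def by (simp add: off_load_def s2 s3[unfolded One_nat_def] s4 s5[unfolded One_nat_def])
  have vR: "alg_value alg1 alg2 {0} {1} S E1 ER A = x1 (0,0) + x1 (0,1) + xr (1,0)"
    unfolding alg_value_def Let_def x1_def[symmetric] xr_def[symmetric]
    unfolding S_def by (simp add: off_load_def s2 s3[unfolded One_nat_def] s6 s7[unfolded One_nat_def])
  have adv: "ADVICE E1 EC A = 2"
  proof -
    have "Max (card ` {M. M \<subseteq> EC \<and> matching M \<and> snd ` M \<inter> snd ` A = {}}) = 1"
    proof (rule max_eq)
      show "finite (card ` {M. M \<subseteq> EC \<and> matching M \<and> snd ` M \<inter> snd ` A = {}})"
        unfolding EC_def by (rule finite_imageI) (rule finite_subset[of _ "Pow {(1,1)}"], auto)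
      show "1 \<in> card ` {M. M \<subseteq> EC \<and> matching M \<and> snd ` M \<inter> snd ` A = {}}"
        unfolding EC_def A_def matching_def by (rule image_eqI[of _ _ "{(1,1)}"]) auto
      show "\<forall>y\<in>card ` {M. M \<subseteq> EC \<and> matching M \<and> snd ` M \<inter> snd ` A = {}}. y \<le> 1"
        unfolding EC_def using card_mono[of "{(1::nat,1::nat)}"] by fastforce
    qed
    thus ?thesis unfolding ADVICE_def A_def by simp
  qed
  have opt: "OPT E1 ER = 2"
    unfolding OPT_def
  proof (rule max_eq)
    show "finite (card ` {M. M \<subseteq> E1 \<union> ER \<and> matching M})"
      unfolding E1_def ER_def by (rule finite_imageI) (rule finite_subset[of _ "Pow {(0,0),(0,1),(1,0)}"], auto)
    show "2 \<in> card ` {M. M \<subseteq> E1 \<union> ER \<and> matching M}"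
      unfolding E1_def ER_def matching_def by (rule image_eqI[of _ _ "{(0,1),(1,0)}"]) auto
    show "\<forall>y\<in>card ` {M. M \<subseteq> E1 \<union> ER \<and> matching M}. y \<le> 2"
    proof
      fix y assume "y \<in> card ` {M. M \<subseteq> E1 \<union> ER \<and> matching M}"
      then obtain M where M: "M \<subseteq> E1 \<union> ER" "matching M" "y = card M" by blast
      have "snd ` M \<subseteq> {0,1}" using M(1) unfolding E1_def ER_def by auto
      from card_match_le[OF M(2) this] show "y \<le> 2" using M(3) by simp
    qed
  qed
  have "C * 2 \<le> x1 (0,0) + x1 (0,1) + xc (1,1)"
    using assms(3) instC vC adv unfolding consistent_def by fastforce
  moreover have "R * 2 \<le> x1 (0,0) + x1 (0,1) + xr (1,0)"
    using assms(2) instR vR opt unfolding robust_def by fastforce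
  ultimately show ?thesis using ab c2 r2 by linarith
qed

end
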